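(* Let $V$ be a finite set of truth values and $\models_{\mathcal{D}_p,\mathcal{D}_c}$ a mixed consequence truth-relation on $V$ that is not pure ($\mathcal{D}_p\neq\mathcal{D}_c$), with constant expressive semantics. Then it admits regular connectives whose regularity rules are satisfied by no classical connective, and it also admits, for every classical connective, a regular connective sharing a regularity rule with it.
   Context: $V$ contains distinct $1,0$; sets of designated values $\mathcal{D}$ satisfy $1\in\mathcal{D}$, $0\notin\mathcal{D}$; $\gamma\models_{\mathcal{D}_p,\mathcal{D}_c}\delta$ iff ($\gamma\subseteq\mathcal{D}_p\Rightarrow\delta\cap\mathcal{D}_c\neq\emptyset$); pure means $\mathcal{D}_p=\mathcal{D}_c$. Semantics: valuations mapping atoms to $V$, connectives (of any arity, including $0$) interpreted by fixed truth functions, extended compositionally, every assignment to finitely many distinct atoms realized; constant expressive: every value is the constant value of some formula. $\Gamma\vdash\Delta$ iff $v(\Gamma)\models v(\Delta)$ for all $v$. An $n$-ary connective $C$ is regular with rule $(\mathcal{B}^p,\mathcal{B}^c)$, $\mathcal{B}^p,\mathcal{B}^c\subseteq\mathcal{P}(\{1..n\})^2$, if for all $\Gamma,\Delta,F_1..F_n$: $\Gamma\cup\{C(\vec F)\}\vdash\Delta$ iff for all $(B_p,B_c)\in\mathcal{B}^p$, $\Gamma\cup\{F_i:i\in B_p\}\vdash\{F_i:i\in B_c\}\cup\Delta$; $\Gamma\vdash\{C(\vec F)\}\cup\Delta$ iff the same for all $(B_p,B_c)\in\mathcal{B}^c$ (empty conjunction = true). Classical logic: $V=\{0,1\}$ with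 $\models_{\{1\},\{1\}}$; classical connectives: truth functions $\{0,1\}^n\to\{0,1\}$. Connectives share a regularity rule if some $(\mathcal{B}^p,\mathcal{B}^c)$ is satisfied by both. *)

theory Defs
  imports Main
begin

datatype 'c fm = Var nat | App 'c "'c fm list"

fun wff :: "('c \<Rightarrow> nat) \<Rightarrow> 'c fm \<Rightarrow> bool" where
  "wff ar (Var p) = True"
| "wff ar (App c Fs) = (length Fs = ar c \<and> (\<forall>F\<in>set Fs. wff ar F))"

fun eval :: "('c \<Rightarrow> 'v list \<Rightarrow> 'v) \<Rightarrow> (nat \<Rightarrow> 'v) \<Rightarrow> 'c fm \<Rightarrow> 'v" where
  "eval I v (Var p) = v p"
| "eval I v (App c Fs) = I c (map (eval I v) Fs)"

definition mc :: "'v set \<Rightarrow> 'v set \<Rightarrow> 'v set \<Rightarrow> 'v set \<Rightarrow> bool" where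
  "mc Dp Dc \<gamma> \<delta> \<longleftrightarrow> (\<gamma> \<subseteq> Dp \<longrightarrow> \<delta> \<inter> Dc \<noteq> {})"

definition realizes_all :: "(nat \<Rightarrow> 'v) set \<Rightarrow> bool" where
  "realizes_all Val \<longleftrightarrow>
     (\<forall>A a. finite A \<longrightarrow> (\<exists>v\<in>Val. \<forall>p\<in>A. v p = a p))"

definition ent :: "(nat \<Rightarrow> 'v) set \<Rightarrow> ('c \<Rightarrow> 'v list \<Rightarrow> 'v) \<Rightarrow> 'v set \<Rightarrow> 'v set
                   \<Rightarrow> 'c fm set \<Rightarrow> 'c fm set \<Rightarrow> bool" where
  "ent Val I Dp Dc \<Gamma> \<Delta> \<longleftrightarrow> (\<forall>v\<in>Val. mc Dp Dc (eval I v ` \<Gamma>) (eval I v ` \<Delta>))"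

definition constant_expressive :: "(nat \<Rightarrow> 'v) set \<Rightarrow> ('c \<Rightarrow> nat) \<Rightarrow> ('c \<Rightarrow> 'v list \<Rightarrow> 'v) \<Rightarrow> bool" where
  "constant_expressive Val ar I \<longleftrightarrow>
     (\<forall>x::'v. \<exists>F. wff ar F \<and> (\<forall>v\<in>Val. eval I v F = x))"

definition is_rule :: "nat \<Rightarrow> (nat set \<times> nat set) set \<times> (nat set \<times> nat set) set \<Rightarrow> bool" where
  "is_rule n R \<longleftrightarrow> (\<forall>(P,Q)\<in>fst R \<union> snd R. P \<subseteq> {1..n} \<and> Q \<subseteq> {1..n})"

text \<open>Argument selection {F_i : i \<in> B}, arguments indexed from 1.\<close>
definition sel :: "'a list \<Rightarrow> nat set \<Rightarrow> 'a set" where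
  "sel Fs B = {Fs ! (i - 1) | i. i \<in> B}"

definition regular :: "(nat \<Rightarrow> 'v) set \<Rightarrow> ('c \<Rightarrow> nat) \<Rightarrow> ('c \<Rightarrow> 'v list \<Rightarrow> 'v) \<Rightarrow> 'v set \<Rightarrow> 'v set
     \<Rightarrow> 'c \<Rightarrow> (nat set \<times> nat set) set \<times> (nat set \<times> nat set) set \<Rightarrow> bool" where
  "regular Val ar I Dp Dc c R \<longleftrightarrow> is_rule (ar c) R \<and>
     (\<forall>\<Gamma> \<Delta> Fs. (\<forall>F\<in>\<Gamma> \<union> \<Delta> \<union> set Fs. wff ar F) \<and> length Fs = ar c \<longrightarrow>
        (ent Val I Dp Dc (insert (App c Fs) \<Gamma>) \<Delta> \<longleftrightarrow>
           (\<forall>(P,Q)\<in>fst R. ent Val I Dp Dc (\<Gamma> \<union> sel Fs P) (sel Fs Q \<union> \<Delta>))) \<and>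
        (ent Val I Dp Dc \<Gamma> (insert (App c Fs) \<Delta>) \<longleftrightarrow>
           (\<forall>(P,Q)\<in>snd R. ent Val I Dp Dc (\<Gamma> \<union> sel Fs P) (sel Fs Q \<union> \<Delta>))))"

text \<open>Extending a semantics by one new n-ary connective (named None) with truth function f.\<close>
definition ext_ar :: "('c \<Rightarrow> nat) \<Rightarrow> nat \<Rightarrow> 'c option \<Rightarrow> nat" where
  "ext_ar ar n x = (case x of None \<Rightarrow> n | Some c \<Rightarrow> ar c)"

definition ext_I :: "('c \<Rightarrow> 'v list \<Rightarrow> 'v) \<Rightarrow> ('v list \<Rightarrow> 'v) \<Rightarrow> 'c option \<Rightarrow> 'v list \<Rightarrow> 'v" where
  "ext_I I f x = (case x of None \<Rightarrow> f | Some c \<Rightarrow> I c)"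

text \<open>Classical logic: values bool (1 = True, 0 = False), relation with Dp = Dc = {True},
  all classical connectives (n, g) with arity n and truth function g, all valuations.\<close>
definition classical_regular :: "nat \<Rightarrow> (bool list \<Rightarrow> bool)
     \<Rightarrow> (nat set \<times> nat set) set \<times> (nat set \<times> nat set) set \<Rightarrow> bool" where
  "classical_regular n g R \<longleftrightarrow> regular UNIV fst snd {True} {True} (n, g) R"

end

theory Submission
  imports Defs
begin

lemma sel_image:
  assumes "P \<subseteq> {1..length Fs}"
  shows "h ` sel Fs P = {(map h Fs) ! (i - 1) | i. i \<in> P}"
  using assms unfolding sel_def by (auto; force)

lemma pointwise_regular:
  assumes rule: "is_rule (ar c) R"
    and L: "\<And>xs. length xs = ar c \<Longrightarrow> (I c xs \<in> Dp \<longleftrightarrow>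
        (\<exists>(P,Q)\<in>fst R. (\<forall>i\<in>P. xs!(i-1) \<in> Dp) \<and> (\<forall>i\<in>Q. xs!(i-1) \<notin> Dc)))"
    and Rr: "\<And>xs. length xs = ar c \<Longrightarrow> (I c xs \<notin> Dc \<longleftrightarrow>
        (\<exists>(P,Q)\<in>snd R. (\<forall>i\<in>P. xs!(i-1) \<in> Dp) \<and> (\<forall>i\<in>Q. xs!(i-1) \<notin> Dc)))"
  shows "regular Val ar I Dp Dc c R"
  unfolding regular_def
proof (intro conjI rule allI impI)
  fix \<Gamma> \<Delta> Fs
  assume "(\<forall>F\<in>\<Gamma> \<union> \<Delta> \<union> set Fs. wff ar F) \<and> length Fs = ar c"
  then have len: "length Fs = ar c" by (rule conjunct2)
  have key: "\<And>v P. P \<subseteq> {1..ar c} \<Longrightarrow> eval I v ` sel Fs P = {(map (eval I v) Fs) ! (i - 1) | i. i \<in> P}"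
    by (rule sel_image) (simp add: len)
  have subs: "\<And>P Q. (P,Q) \<in> fst R \<union> snd R \<Longrightarrow> P \<subseteq> {1..ar c} \<and> Q \<subseteq> {1..ar c}"
  proof -
    fix P Q assume a: "(P,Q) \<in> fst R \<union> snd R"
    have "case (P,Q) of (P,Q) \<Rightarrow> P \<subseteq> {1..ar c} \<and> Q \<subseteq> {1..ar c}"
      using rule a unfolding is_rule_def by (rule bspec)
    then show "P \<subseteq> {1..ar c} \<and> Q \<subseteq> {1..ar c}" by simp
  qed
  have e: "\<And>v. eval I v (App c Fs) = I c (map (eval I v) Fs)" by simp
  show "ent Val I Dp Dc (insert (App c Fs) \<Gamma>) \<Delta> =
    (\<forall>(P, Q)\<in>fst R. ent Val I Dp Dc (\<Gamma> \<union> sel Fs P) (sel Fs Q \<union> \<Delta>))"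
  proof
    assume H: "ent Val I Dp Dc (insert (App c Fs) \<Gamma>) \<Delta>"
    show "\<forall>(P, Q)\<in>fst R. ent Val I Dp Dc (\<Gamma> \<union> sel Fs P) (sel Fs Q \<union> \<Delta>)"
    proof (clarify)
      fix P Q assume PQ: "(P,Q) \<in> fst R"
      show "ent Val I Dp Dc (\<Gamma> \<union> sel Fs P) (sel Fs Q \<union> \<Delta>)"
        unfolding ent_def mc_def
      proof (intro ballI impI)
        fix v assume v: "v \<in> Val" and g: "eval I v ` (\<Gamma> \<union> sel Fs P) \<subseteq> Dp"
        show "eval I v ` (sel Fs Q \<union> \<Delta>) \<inter> Dc \<noteq> {}"
        proof
          assume emp: "eval I v ` (sel Fs Q \<union> \<Delta>) \<inter> Dc = {}"
          have sP: "P \<subseteq> {1..ar c}" and sQ: "Q \<subseteq> {1..ar c}" using subs[of P Q] PQ by auto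
          have p: "\<forall>i\<in>P. (map (eval I v) Fs)!(i-1) \<in> Dp"
            using g key[OF sP, of v] by blast
          have q: "\<forall>i\<in>Q. (map (eval I v) Fs)!(i-1) \<notin> Dc"
            using emp key[OF sQ, of v] by blast
          have ex: "\<exists>(P,Q)\<in>fst R. (\<forall>i\<in>P. (map (eval I v) Fs)!(i-1) \<in> Dp) \<and> (\<forall>i\<in>Q. (map (eval I v) Fs)!(i-1) \<notin> Dc)"
            using PQ p q by blast
          have "I c (map (eval I v) Fs) \<in> Dp"
            using L[of "map (eval I v) Fs"] len ex by simp
          moreover have "eval I v ` insert (App c Fs) \<Gamma> \<subseteq> Dp \<longrightarrow> eval I v ` \<Delta> \<inter> Dc \<noteq> {}"
            using H v unfolding ent_def mc_def by blast
          moreover have "eval I v ` \<Gamma> \<subseteq> Dp" "eval I v ` \<Delta> \<inter> Dc = {}" using g emp by auto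
          ultimately show False by (simp add: e)
        qed
      qed
    qed
  next
    assume H: "\<forall>(P, Q)\<in>fst R. ent Val I Dp Dc (\<Gamma> \<union> sel Fs P) (sel Fs Q \<union> \<Delta>)"
    show "ent Val I Dp Dc (insert (App c Fs) \<Gamma>) \<Delta>"
      unfolding ent_def mc_def
    proof (intro ballI impI)
      fix v assume v: "v \<in> Val" and g: "eval I v ` insert (App c Fs) \<Gamma> \<subseteq> Dp"
      then have "I c (map (eval I v) Fs) \<in> Dp" by simp
      then obtain P Q where PQ: "(P,Q) \<in> fst R" and p: "\<forall>i\<in>P. (map (eval I v) Fs)!(i-1) \<in> Dp"
        and q: "\<forall>i\<in>Q. (map (eval I v) Fs)!(i-1) \<notin> Dc"
        using L[of "map (eval I v) Fs"] len by auto
      have "ent Val I Dp Dc (\<Gamma> \<union> sel Fs P) (sel Fs Q \<union> \<Delta>)" using H PQ by fast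
      then have imp: "eval I v ` (\<Gamma> \<union> sel Fs P) \<subseteq> Dp \<longrightarrow> eval I v ` (sel Fs Q \<union> \<Delta>) \<inter> Dc \<noteq> {}"
        using v unfolding ent_def mc_def by blast
      have sP: "P \<subseteq> {1..ar c}" and sQ: "Q \<subseteq> {1..ar c}" using subs[of P Q] PQ by auto
      moreover have "eval I v ` (\<Gamma> \<union> sel Fs P) \<subseteq> Dp"
        using g p unfolding image_Un key[OF sP] by blast
      moreover have "eval I v ` sel Fs Q \<inter> Dc = {}"
        using q unfolding key[OF sQ] by blast
      ultimately show "eval I v ` \<Delta> \<inter> Dc \<noteq> {}" using imp by auto
    qed
  qed
  show "ent Val I Dp Dc \<Gamma> (insert (App c Fs) \<Delta>) =
    (\<forall>(P, Q)\<in>snd R. ent Val I Dp Dc (\<Gamma> \<union> sel Fs P) (sel Fs Q \<union> \<Delta>))"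
  proof
    assume H: "ent Val I Dp Dc \<Gamma> (insert (App c Fs) \<Delta>)"
    show "\<forall>(P, Q)\<in>snd R. ent Val I Dp Dc (\<Gamma> \<union> sel Fs P) (sel Fs Q \<union> \<Delta>)"
    proof (clarify)
      fix P Q assume PQ: "(P,Q) \<in> snd R"
      show "ent Val I Dp Dc (\<Gamma> \<union> sel Fs P) (sel Fs Q \<union> \<Delta>)"
        unfolding ent_def mc_def
      proof (intro ballI impI)
        fix v assume v: "v \<in> Val" and g: "eval I v ` (\<Gamma> \<union> sel Fs P) \<subseteq> Dp"
        show "eval I v ` (sel Fs Q \<union> \<Delta>) \<inter> Dc \<noteq> {}"
        proof
          assume emp: "eval I v ` (sel Fs Q \<union> \<Delta>) \<inter> Dc = {}"
          have sP: "P \<subseteq> {1..ar c}" and sQ: "Q \<subseteq> {1..ar c}" using subs[of P Q] PQ by auto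
          have p: "\<forall>i\<in>P. (map (eval I v) Fs)!(i-1) \<in> Dp"
            using g key[OF sP, of v] by blast
          have q: "\<forall>i\<in>Q. (map (eval I v) Fs)!(i-1) \<notin> Dc"
            using emp key[OF sQ, of v] by blast
          have ex: "\<exists>(P,Q)\<in>snd R. (\<forall>i\<in>P. (map (eval I v) Fs)!(i-1) \<in> Dp) \<and> (\<forall>i\<in>Q. (map (eval I v) Fs)!(i-1) \<notin> Dc)"
            using PQ p q by blast
          have "I c (map (eval I v) Fs) \<notin> Dc"
            using Rr[of "map (eval I v) Fs"] len ex by simp
          moreover have "eval I v ` \<Gamma> \<subseteq> Dp \<longrightarrow> eval I v ` insert (App c Fs) \<Delta> \<inter> Dc \<noteq> {}"
            using H v unfolding ent_def mc_def by blast
          moreover have "eval I v ` \<Gamma> \<subseteq> Dp" "eval I v ` \<Delta> \<inter> Dc = {}" using g emp by auto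
          ultimately show False by (simp add: e)
        qed
      qed
    qed
  next
    assume H: "\<forall>(P, Q)\<in>snd R. ent Val I Dp Dc (\<Gamma> \<union> sel Fs P) (sel Fs Q \<union> \<Delta>)"
    show "ent Val I Dp Dc \<Gamma> (insert (App c Fs) \<Delta>)"
      unfolding ent_def mc_def
    proof (intro ballI impI)
      fix v assume v: "v \<in> Val" and g: "eval I v ` \<Gamma> \<subseteq> Dp"
      show "eval I v ` insert (App c Fs) \<Delta> \<inter> Dc \<noteq> {}"
      proof (cases "I c (map (eval I v) Fs) \<in> Dc")
        case True then show ?thesis by auto
      next
        case False
        then obtain P Q where PQ: "(P,Q) \<in> snd R" and p: "\<forall>i\<in>P. (map (eval I v) Fs)!(i-1) \<in> Dp"
          and q: "\<forall>i\<in>Q. (map (eval I v) Fs)!(i-1) \<notin> Dc"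
          using Rr[of "map (eval I v) Fs"] len by auto
        have "ent Val I Dp Dc (\<Gamma> \<union> sel Fs P) (sel Fs Q \<union> \<Delta>)" using H PQ by fast
        then have imp: "eval I v ` (\<Gamma> \<union> sel Fs P) \<subseteq> Dp \<longrightarrow> eval I v ` (sel Fs Q \<union> \<Delta>) \<inter> Dc \<noteq> {}"
          using v unfolding ent_def mc_def by blast
        have sP: "P \<subseteq> {1..ar c}" and sQ: "Q \<subseteq> {1..ar c}" using subs[of P Q] PQ by auto
        moreover have "eval I v ` (\<Gamma> \<union> sel Fs P) \<subseteq> Dp"
          using g p unfolding image_Un key[OF sP] by blast
        moreover have "eval I v ` sel Fs Q \<inter> Dc = {}"
          using q unfolding key[OF sQ] by blast
        ultimately show ?thesis using imp by auto
      qed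
    qed
  qed
qed


definition Pr :: "bool list \<Rightarrow> nat set" where
  "Pr r = {i. 1 \<le> i \<and> i \<le> length r \<and> r!(i-1)}"
definition Qr :: "bool list \<Rightarrow> nat set" where
  "Qr r = {i. 1 \<le> i \<and> i \<le> length r \<and> \<not> r!(i-1)}"
definition Rg :: "nat \<Rightarrow> (bool list \<Rightarrow> bool) \<Rightarrow> (nat set \<times> nat set) set \<times> (nat set \<times> nat set) set" where
  "Rg n g = ({(Pr r, Qr r) | r. length r = n \<and> g r}, {(Pr r, Qr r) | r. length r = n \<and> \<not> g r})"

definition compat :: "'v set \<Rightarrow> 'v set \<Rightarrow> 'v list \<Rightarrow> bool list \<Rightarrow> bool" where
  "compat Dp Dc xs r \<longleftrightarrow> length r = length xs \<and> (\<forall>i\<in>Pr r. xs!(i-1) \<in> Dp) \<and> (\<forall>i\<in>Qr r. xs!(i-1) \<notin> Dc)"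

lemma compat_alt1:
  assumes "compat Dp Dc xs r" "j < length xs"
  shows "(r!j \<longrightarrow> xs!j \<in> Dp) \<and> (\<not> r!j \<longrightarrow> xs!j \<notin> Dc)"
proof -
  have l: "length r = length xs" and p: "\<forall>i\<in>Pr r. xs!(i-1) \<in> Dp" and q: "\<forall>i\<in>Qr r. xs!(i-1) \<notin> Dc"
    using assms(1) unfolding compat_def by auto
  have "r!j \<Longrightarrow> Suc j \<in> Pr r" "\<not> r!j \<Longrightarrow> Suc j \<in> Qr r" using l assms(2) unfolding Pr_def Qr_def by auto
  then show ?thesis using p q by fastforce
qed

lemma compat_alt: "compat Dp Dc xs r \<longleftrightarrow> length r = length xs \<and>
   (\<forall>j<length xs. (r!j \<longrightarrow> xs!j \<in> Dp) \<and> (\<not> r!j \<longrightarrow> xs!j \<notin> Dc))"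
proof
  assume "compat Dp Dc xs r" then show "length r = length xs \<and>
   (\<forall>j<length xs. (r!j \<longrightarrow> xs!j \<in> Dp) \<and> (\<not> r!j \<longrightarrow> xs!j \<notin> Dc))"
    using compat_alt1 unfolding compat_def by blast
next
  assume h: "length r = length xs \<and>
   (\<forall>j<length xs. (r!j \<longrightarrow> xs!j \<in> Dp) \<and> (\<not> r!j \<longrightarrow> xs!j \<notin> Dc))"
  show "compat Dp Dc xs r" unfolding compat_def Pr_def Qr_def
  proof (intro conjI ballI)
    show "length r = length xs" using h by simp
  next
    fix i assume "i \<in> {i. 1 \<le> i \<and> i \<le> length r \<and> r ! (i - 1)}"
    then show "xs ! (i - 1) \<in> Dp" using h[THEN conjunct2, rule_format, of "i-1"] h by auto
  next
    fix i assume "i \<in> {i. 1 \<le> i \<and> i \<le> length r \<and> \<not> r ! (i - 1)}"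
    then show "xs ! (i - 1) \<notin> Dc" using h[THEN conjunct2, rule_format, of "i-1"] h by auto
  qed
qed

lemma is_rule_Rg: "is_rule n (Rg n g)"
  unfolding is_rule_def Rg_def Pr_def Qr_def by auto

lemma Rg_fst: "length xs = n \<Longrightarrow> (\<exists>(P,Q)\<in>fst (Rg n g). (\<forall>i\<in>P. xs!(i-1) \<in> Dp) \<and> (\<forall>i\<in>Q. xs!(i-1) \<notin> Dc))
   \<longleftrightarrow> (\<exists>r. compat Dp Dc xs r \<and> g r)"
  unfolding Rg_def compat_def by auto

lemma Rg_snd: "length xs = n \<Longrightarrow> (\<exists>(P,Q)\<in>snd (Rg n g). (\<forall>i\<in>P. xs!(i-1) \<in> Dp) \<and> (\<forall>i\<in>Q. xs!(i-1) \<notin> Dc))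
   \<longleftrightarrow> (\<exists>r. compat Dp Dc xs r \<and> \<not> g r)"
  unfolding Rg_def compat_def by auto

lemma compat_classical: "compat {True} {True} xs r \<longleftrightarrow> r = xs"
  unfolding compat_alt by (auto intro!: nth_equalityI)

lemma classical_Rg: "classical_regular n g (Rg n g)"
  unfolding classical_regular_def
  apply (rule pointwise_regular)
    apply (simp add: is_rule_Rg)
   apply (subst Rg_fst, simp, simp add: compat_classical)
  apply (subst Rg_snd, simp, simp add: compat_classical)
  done

lemma exists_val:
  assumes "one \<in> Dp" "zero \<notin> Dp" "one \<in> Dc" "zero \<notin> Dc"
  shows "\<exists>y. (y \<in> Dp \<longleftrightarrow> (\<exists>r. compat Dp Dc xs r \<and> g r)) \<and> (y \<notin> Dc \<longleftrightarrow> (\<exists>r. compat Dp Dc xs r \<and> \<not> g r))"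
proof (cases "\<exists>r. compat Dp Dc xs r \<and> g r")
  case A: True
  show ?thesis
  proof (cases "\<exists>r. compat Dp Dc xs r \<and> \<not> g r")
    case True
    obtain r1 r2 where r1: "compat Dp Dc xs r1" "g r1" and r2: "compat Dp Dc xs r2" "\<not> g r2"
      using A True by blast
    have "r1 \<noteq> r2" using r1 r2 by auto
    moreover have "length r1 = length r2" using r1 r2 compat_alt by metis
    ultimately obtain j where j: "j < length r1" "r1!j \<noteq> r2!j" using nth_equalityI by blast
    have "xs!j \<in> Dp \<and> xs!j \<notin> Dc" using j r1 r2 unfolding compat_alt by (cases "r1!j") auto
    then show ?thesis using A True by (intro exI[of _ "xs!j"]) simp
  next
    case False then show ?thesis using A assms by (intro exI[of _ one]) simp
  qed
next
  case A: False
  show ?thesis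
  proof (cases "\<exists>r. compat Dp Dc xs r \<and> \<not> g r")
    case True then show ?thesis using A assms by (intro exI[of _ zero]) simp
  next
    case False
    have "\<exists>j<length xs. xs!j \<in> Dc \<and> xs!j \<notin> Dp"
    proof (rule ccontr)
      assume "\<not> ?thesis"
      then have "compat Dp Dc xs (map (\<lambda>x. x \<in> Dp) xs)" unfolding compat_alt by auto
      then show False using A False by blast
    qed
    then obtain j where "xs!j \<in> Dc" "xs!j \<notin> Dp" by blast
    then show ?thesis using A False by (intro exI[of _ "xs!j"]) simp
  qed
qed

theorem theorem6p3:
  fixes one zero :: "'v::finite"
    and Dp Dc :: "'v set"
    and Val :: "(nat \<Rightarrow> 'v) set"
    and ar :: "'c \<Rightarrow> nat"
    and I :: "'c \<Rightarrow> 'v list \<Rightarrow> 'v"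
  assumes "one \<noteq> zero"
    and "one \<in> Dp" and "zero \<notin> Dp"
    and "one \<in> Dc" and "zero \<notin> Dc"
    and "Dp \<noteq> Dc"
    and "realizes_all Val"
    and "constant_expressive Val ar I"
  shows "(\<exists>n f R. regular Val (ext_ar ar n) (ext_I I f) Dp Dc None R
                 \<and> (\<forall>g. \<not> classical_regular n g R))
       \<and> (\<forall>n g. \<exists>f R. regular Val (ext_ar ar n) (ext_I I f) Dp Dc None R
                 \<and> classical_regular n g R)"
proof
  show "\<exists>n f R. regular Val (ext_ar ar n) (ext_I I f) Dp Dc None R
                 \<and> (\<forall>g. \<not> classical_regular n g R)"
  proof (cases "\<exists>a. a \<in> Dp \<and> a \<notin> Dc")
    case True
    then obtain a where a: "a \<in> Dp" "a \<notin> Dc" by blast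
    let ?R = "({({},{})},{({},{})}) :: (nat set \<times> nat set) set \<times> (nat set \<times> nat set) set"
    have "regular Val (ext_ar ar 0) (ext_I I (\<lambda>_. a)) Dp Dc None ?R"
      by (rule pointwise_regular) (auto simp: is_rule_def ext_ar_def ext_I_def a)
    moreover have "\<not> classical_regular 0 g ?R" for g
    proof
      assume "classical_regular 0 g ?R"
      then show False
        unfolding classical_regular_def regular_def
        apply (elim conjE)
        apply (drule spec[of _ "{}"], drule spec[of _ "{}"], drule spec[of _ "[]"])
        by (simp add: ent_def mc_def sel_def)
    qed
    ultimately show ?thesis by blast
  next
    case False
    then obtain b where b: "b \<in> Dc" "b \<notin> Dp" using assms(6) by blast
    let ?R = "({},{}) :: (nat set \<times> nat set) set \<times> (nat set \<times> nat set) set"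
    have "regular Val (ext_ar ar 0) (ext_I I (\<lambda>_. b)) Dp Dc None ?R"
      by (rule pointwise_regular) (auto simp: is_rule_def ext_ar_def ext_I_def b)
    moreover have "\<not> classical_regular 0 g ?R" for g
    proof
      assume "classical_regular 0 g ?R"
      then show False
        unfolding classical_regular_def regular_def
        apply (elim conjE)
        apply (drule spec[of _ "{}"], drule spec[of _ "{}"], drule spec[of _ "[]"])
        by (simp add: ent_def mc_def)
    qed
    ultimately show ?thesis by blast
  qed
next
  show "\<forall>n g. \<exists>f R. regular Val (ext_ar ar n) (ext_I I f) Dp Dc None R
                 \<and> classical_regular n g R"
  proof (intro allI)
    fix n g
    define f where "f xs = (SOME y. (y \<in> Dp \<longleftrightarrow> (\<exists>r. compat Dp Dc xs r \<and> g r)) \<and> (y \<notin> Dc \<longleftrightarrow> (\<exists>r. compat Dp Dc xs r \<and> \<not> g r)))" for xs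
    have fx: "(f xs \<in> Dp \<longleftrightarrow> (\<exists>r. compat Dp Dc xs r \<and> g r)) \<and> (f xs \<notin> Dc \<longleftrightarrow> (\<exists>r. compat Dp Dc xs r \<and> \<not> g r))" for xs
      unfolding f_def by (rule someI_ex, rule exists_val[OF assms(2-5)])
    have "regular Val (ext_ar ar n) (ext_I I f) Dp Dc None (Rg n g)"
      apply (rule pointwise_regular)
        apply (simp add: is_rule_Rg ext_ar_def)
       apply (subst Rg_fst, simp add: ext_ar_def, simp add: ext_I_def fx)
      apply (subst Rg_snd, simp add: ext_ar_def, simp add: ext_I_def fx)
      done
    then show "\<exists>f R. regular Val (ext_ar ar n) (ext_I I f) Dp Dc None R \<and> classical_regular n g R"
      using classical_Rg by blast
  qed
qed

end
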